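(* Let $n\ge2$, $\gamma\in\,]0,1]$, $p\in[1,\infty[$, and let $\Omega$ be a bounded domain in $\mathbb{R}^n$. Assume that there exists $c_0>0$ such that $|B_\gamma(x,r)\cap\Omega|\ge c_0 r^{n_\gamma}$ for all $x\in\overline\Omega$ and all $0<r\le \operatorname{diam}_{\delta_\gamma}\Omega$. Assume moreover that there are constants $\tau\ge1$, $\tilde\eta>0$ and $c_p>0$ such that the Poincaré inequality $$\frac{1}{|\Omega\cap B_\gamma(x,r)|}\int_{\Omega\cap B_\gamma(x,r)}\bigl|f-f_{\Omega\cap B_\gamma(x,r)}\bigr|\,dy\le c_p\, r^{\tilde\eta}\left(\frac{1}{|\Omega\cap B_\gamma(x,\tau r)|}\int_{\Omega\cap B_\gamma(x,\tau r)}|\nabla f|^p\,dy\right)^{1/p}$$ holds for all $f\in W^1_p(\Omega)$, all $x\in\Omega$ and all $r>0$, where $f_E=\frac{1}{|E|}\int_E f$. Let $\lambda>0$ satisfy $p\tilde\eta>n_\gamma-\lambda$. Then there exists $c>0$ such that for every $f\in W^{1,\lambda}_{p,\gamma}(\Omega)$ (identified with its continuous representative) and all $x,y\in\Omega$, $$|f(x)-f(y)|\le c\,\|f\|_{W^{1,\lambda}_{p,\gamma}(\Omega)}\bigl(|\bar x-\bar y|^\gamma+|x_n-y_n|\bigr)^{\tilde\eta+\frac{\lambda-n_\gamma}{p}} .$$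
   Context: Points of $\mathbb{R}^n$ are written $x=(\bar x,x_n)$, $\bar x\in\mathbb{R}^{n-1}$. $\delta_\gamma(x,y)=\max\{|\bar x-\bar y|^\gamma,|x_n-y_n|\}$, $B_\gamma(x,r)=\{y:\delta_\gamma(x,y)<r\}$, $\operatorname{diam}_{\delta_\gamma}\Omega$ is the diameter of $\Omega$ in the metric $\delta_\gamma$, and $n_\gamma=\frac{n-1}{\gamma}+1$. For $\lambda\ge0$ and $g\in L^p(\Omega)$, $\|g\|_{L^\lambda_{p,\gamma}(\Omega)}=\sup_{x\in\Omega}\sup_{r>0}\bigl(\frac{1}{\min\{r^\lambda,1\}}\int_{B_\gamma(x,r)\cap\Omega}|g|^p\bigr)^{1/p}$, and $L^\lambda_{p,\gamma}(\Omega)$ is the space where this is finite. For $l\in\mathbb{N}$, $W^{l,\lambda}_{p,\gamma}(\Omega)=\{f\in L^p(\Omega): D^\alpha f\in L^\lambda_{p,\gamma}(\Omega)\ \forall |\alpha|\le l\}$ with norm $\sum_{|\alpha|\le l}\|D^\alpha f\|_{L^\lambda_{p,\gamma}(\Omega)}$ (weak derivatives). *)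

theory Defs
  imports "HOL-Analysis.Analysis"
begin

text \<open>Points of R^n are modelled as pairs (xbar, x_n) :: (real^'m) \<times> real,
  so n = CARD('m) + 1 \<ge> 2.\<close>

type_synonym 'm pt = "(real ^ 'm) \<times> real"

definition delta_g :: "real \<Rightarrow> 'm::finite pt \<Rightarrow> 'm pt \<Rightarrow> real" where
  "delta_g gam x y = max (norm (fst x - fst y) powr gam) \<bar>snd x - snd y\<bar>"

definition ball_g :: "real \<Rightarrow> 'm::finite pt \<Rightarrow> real \<Rightarrow> 'm pt set" where
  "ball_g gam x r = {y. delta_g gam x y < r}"

definition diam_g :: "real \<Rightarrow> 'm::finite pt set \<Rightarrow> real" where
  "diam_g gam S = Sup {delta_g gam x y | x y. x \<in> S \<and> y \<in> S}"

definition n_gam :: "real \<Rightarrow> 'm::finite itself \<Rightarrow> real" where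
  "n_gam gam (_ :: 'm itself) = real CARD('m) / gam + 1"

coinductive smooth_fun :: "('a::euclidean_space \<Rightarrow> real) \<Rightarrow> bool" where
  "(\<forall>x. f differentiable (at x)) \<Longrightarrow>
   (\<forall>i\<in>Basis. smooth_fun (\<lambda>x. frechet_derivative f (at x) i)) \<Longrightarrow> smooth_fun f"

definition tsupport :: "('a::real_normed_vector \<Rightarrow> real) \<Rightarrow> 'a set" where
  "tsupport \<phi> = closure {x. \<phi> x \<noteq> 0}"

definition test_fun :: "'a::euclidean_space set \<Rightarrow> ('a \<Rightarrow> real) \<Rightarrow> bool" where
  "test_fun \<Omega> \<phi> \<longleftrightarrow> smooth_fun \<phi> \<and> compact (tsupport \<phi>) \<and> tsupport \<phi> \<subseteq> \<Omega>"

definition weak_partial ::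
  "'a::euclidean_space set \<Rightarrow> ('a \<Rightarrow> real) \<Rightarrow> 'a \<Rightarrow> ('a \<Rightarrow> real) \<Rightarrow> bool" where
  "weak_partial \<Omega> f i g \<longleftrightarrow>
     (\<forall>\<phi>. test_fun \<Omega> \<phi> \<longrightarrow>
        (\<integral>x. f x * frechet_derivative \<phi> (at x) i \<partial>(lebesgue_on \<Omega>))
          = - (\<integral>x. g x * \<phi> x \<partial>(lebesgue_on \<Omega>)))"

definition Lp :: "'a::euclidean_space set \<Rightarrow> real \<Rightarrow> ('a \<Rightarrow> real) \<Rightarrow> bool" where
  "Lp \<Omega> p f \<longleftrightarrow> f \<in> borel_measurable (lebesgue_on \<Omega>) \<and>
      integrable (lebesgue_on \<Omega>) (\<lambda>x. \<bar>f x\<bar> powr p)"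

definition morrey_vals ::
  "real \<Rightarrow> real \<Rightarrow> real \<Rightarrow> 'm::finite pt set \<Rightarrow> ('m pt \<Rightarrow> real) \<Rightarrow> real set" where
  "morrey_vals lam p gam \<Omega> g =
     {((1 / min (r powr lam) 1) *
        (\<integral>y. \<bar>g y\<bar> powr p \<partial>(lebesgue_on (ball_g gam x r \<inter> \<Omega>)))) powr (1/p)
      | x r. x \<in> \<Omega> \<and> r > 0}"

definition in_morrey ::
  "real \<Rightarrow> real \<Rightarrow> real \<Rightarrow> 'm::finite pt set \<Rightarrow> ('m pt \<Rightarrow> real) \<Rightarrow> bool" where
  "in_morrey lam p gam \<Omega> g \<longleftrightarrow> Lp \<Omega> p g \<and> bdd_above (morrey_vals lam p gam \<Omega> g)"

definition morrey_norm ::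
  "real \<Rightarrow> real \<Rightarrow> real \<Rightarrow> 'm::finite pt set \<Rightarrow> ('m pt \<Rightarrow> real) \<Rightarrow> real" where
  "morrey_norm lam p gam \<Omega> g = Sup (morrey_vals lam p gam \<Omega> g)"

definition avg :: "'a::euclidean_space set \<Rightarrow> ('a \<Rightarrow> real) \<Rightarrow> real" where
  "avg E f = (1 / measure lebesgue E) * (\<integral>y. f y \<partial>(lebesgue_on E))"

end

theory Submission
  imports Defs
begin

lemma powr_subadd:
  fixes a b g :: real
  assumes "0 \<le> a" "0 \<le> b" "0 < g" "g \<le> 1"
  shows "(a + b) powr g \<le> a powr g + b powr g"
proof (cases "a + b = 0")
  case True then show ?thesis using assms by auto
next
  case False
  define s where "s = a + b"
  have s: "s > 0" using False assms s_def by auto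
  have "a / s \<le> (a / s) powr g"
    using powr_mono'[of g 1 "a/s"] assms s s_def by (auto simp: divide_le_eq_1)
  moreover have "b / s \<le> (b / s) powr g"
    using powr_mono'[of g 1 "b/s"] assms s s_def by (auto simp: divide_le_eq_1)
  moreover have "a / s + b / s = 1" using s by (simp add: s_def add_divide_distrib[symmetric])
  ultimately have "1 \<le> (a / s) powr g + (b / s) powr g"
    by linarith
  then have "s powr g * 1 \<le> s powr g * ((a / s) powr g + (b / s) powr g)"
    by (intro mult_left_mono) auto
  also have "\<dots> = a powr g + b powr g"
    using s assms by (simp add: distrib_left powr_divide)
  finally show ?thesis by (simp add: s_def)
qed

lemma delta_g_nonneg: "0 \<le> delta_g gam x y"
  by (simp add: delta_g_def max.coboundedI2)

lemma delta_g_sym: "delta_g gam x y = delta_g gam y x"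
  by (simp add: delta_g_def norm_minus_commute abs_minus_commute)

lemma delta_g_self: "gam > 0 \<Longrightarrow> delta_g gam x x = 0"
  by (simp add: delta_g_def)

lemma delta_g_triangle:
  assumes "0 < gam" "gam \<le> 1"
  shows "delta_g gam x z \<le> delta_g gam x y + delta_g gam y z"
proof -
  have "norm (fst x - fst z) powr gam \<le> (norm (fst x - fst y) + norm (fst y - fst z)) powr gam"
    using assms by (intro powr_mono2) (auto intro: norm_diff_triangle_le)
  also have "\<dots> \<le> norm (fst x - fst y) powr gam + norm (fst y - fst z) powr gam"
    using assms by (intro powr_subadd) auto
  finally have 1: "norm (fst x - fst z) powr gam \<le> delta_g gam x y + delta_g gam y z"
    unfolding delta_g_def by (smt (verit) max.cobounded1)
  have 2: "\<bar>snd x - snd z\<bar> \<le> delta_g gam x y + delta_g gam y z"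
    unfolding delta_g_def by (smt (verit) max.cobounded2)
  show ?thesis using 1 2 by (simp add: delta_g_def)
qed

lemma delta_g_pos: "gam > 0 \<Longrightarrow> x \<noteq> y \<Longrightarrow> 0 < delta_g gam x y"
proof -
  assume "x \<noteq> y"
  then consider "fst x \<noteq> fst y" | "snd x \<noteq> snd y" by (metis prod_eq_iff)
  then show ?thesis
  proof cases
    case 1 then have "0 < norm (fst x - fst y) powr gam" by simp
    then show ?thesis unfolding delta_g_def by linarith
  next
    case 2 then have "0 < \<bar>snd x - snd y\<bar>" by simp
    then show ?thesis unfolding delta_g_def by linarith
  qed
qed

lemma powr_lt_iff_root:
  fixes a r g :: real
  assumes "0 \<le> a" "0 < r" "0 < g"
  shows "a powr g < r \<longleftrightarrow> a < r powr (1/g)"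
proof
  assume "a powr g < r"
  then have "(a powr g) powr (1/g) < r powr (1/g)"
    using assms by (intro powr_less_mono2) auto
  then show "a < r powr (1/g)" using assms by (simp add: powr_powr)
next
  assume "a < r powr (1/g)"
  then have "a powr g < (r powr (1/g)) powr g"
    using assms by (intro powr_less_mono2) auto
  then show "a powr g < r" using assms by (simp add: powr_powr)
qed

lemma delta_g_le_sum: "delta_g gam x y \<le> norm (fst x - fst y) powr gam + \<bar>snd x - snd y\<bar>"
proof -
  have "0 \<le> norm (fst x - fst y) powr gam" "0 \<le> \<bar>snd x - snd y\<bar>" by simp_all
  then show ?thesis unfolding delta_g_def by (intro max.boundedI) linarith+
qed

lemma ball_g_eq:
  fixes x :: "'m::finite pt"
  assumes "0 < gam" "0 < r"
  shows "ball_g gam x r = ball (fst x) (r powr (1/gam)) \<times> {snd x - r <..< snd x + r}"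
proof (rule set_eqI)
  fix y :: "'m::finite pt"
  have *: "norm (fst x - fst y) powr gam < r \<longleftrightarrow> norm (fst x - fst y) < r powr (1/gam)"
    using assms by (intro powr_lt_iff_root) auto
  have "y \<in> ball_g gam x r \<longleftrightarrow> norm (fst x - fst y) powr gam < r \<and> \<bar>snd x - snd y\<bar> < r"
    by (simp add: ball_g_def delta_g_def)
  also have "\<dots> \<longleftrightarrow> norm (fst x - fst y) < r powr (1/gam) \<and> \<bar>snd x - snd y\<bar> < r"
    using * by blast
  also have "\<dots> \<longleftrightarrow> y \<in> ball (fst x) (r powr (1/gam)) \<times> {snd x - r <..< snd x + r}"
    by (cases y) (auto simp: dist_norm abs_diff_less_iff)
  finally show "y \<in> ball_g gam x r \<longleftrightarrow> y \<in> ball (fst x) (r powr (1/gam)) \<times> {snd x - r <..< snd x + r}" .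
qed


lemma box_measure:
  fixes c :: "real ^ 'm::finite" and t rho r :: real
  assumes "0 \<le> rho" "0 \<le> r"
  shows "measure lebesgue (cbox (c - rho *\<^sub>R One, t - r) (c + rho *\<^sub>R One, t + r))
         = (2 * rho) ^ CARD('m) * (2 * r)"
proof -
  have le: "\<forall>b\<in>Basis. (c - rho *\<^sub>R One, t - r) \<bullet> b \<le> (c + rho *\<^sub>R One, t + r) \<bullet> b"
    using assms by (auto simp: Basis_prod_def inner_diff_left inner_add_left)
  have "measure lebesgue (cbox (c - rho *\<^sub>R One, t - r) (c + rho *\<^sub>R One, t + r))
      = measure lborel (cbox (c - rho *\<^sub>R One, t - r) (c + rho *\<^sub>R One, t + r))"
    by simp
  also have "\<dots> = (\<Prod>b\<in>Basis. ((c + rho *\<^sub>R One, t + r) - (c - rho *\<^sub>R One, t - r)) \<bullet> b)"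
    using le by (simp add: measure_lborel_cbox_eq)
  also have "\<dots> = (2 * rho) ^ CARD('m) * (2 * r)"
  proof -
    let ?f = "\<lambda>b. ((c + rho *\<^sub>R One, t + r) - (c - rho *\<^sub>R One, t - r)) \<bullet> b"
    have B: "(Basis :: ('m::finite pt) set) = insert (0,1) ((\<lambda>u. (u, 0)) ` Basis)"
      by (auto simp: Basis_prod_def)
    have nin: "(0::real^'m, 1::real) \<notin> (\<lambda>u. (u, 0)) ` Basis" by auto
    have "prod ?f Basis = ?f (0,1) * prod ?f ((\<lambda>u. (u, 0)) ` Basis)"
      unfolding B using nin by (simp add: prod.insert)
    also have "prod ?f ((\<lambda>u. (u, 0)) ` Basis) = (\<Prod>u\<in>(Basis::(real^'m) set). ?f (u, 0))"
      by (subst prod.reindex) (auto simp: inj_on_def)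
    also have "\<dots> = (\<Prod>u\<in>(Basis::(real^'m) set). 2 * rho)"
    proof (intro prod.cong refl)
      fix u :: "real^'m" assume u: "u \<in> Basis"
      have "?f (u, 0) = (c + rho *\<^sub>R One - (c - rho *\<^sub>R One)) \<bullet> u" by simp
      also have "c + rho *\<^sub>R One - (c - rho *\<^sub>R One) = (2 * rho) *\<^sub>R One"
        by (simp add: algebra_simps flip: scaleR_2)
      also have "((2 * rho) *\<^sub>R One) \<bullet> u = 2 * rho" using u
        by (simp only: inner_scaleR_left inner_sum_Basis)
      finally show "?f (u, 0) = 2 * rho" .
    qed
    also have "\<dots> = (2 * rho) ^ CARD('m)" by simp
    finally show ?thesis by simp
  qed
  finally show ?thesis .
qed


lemma powr_le_one_plus: "0 \<le> t \<Longrightarrow> 0 < g \<Longrightarrow> g \<le> 1 \<Longrightarrow> t powr g \<le> 1 + (t::real)"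
proof (cases "t \<le> 1")
  case True
  assume "0 \<le> t" "0 < g" "g \<le> 1"
  then have "t powr g \<le> 1 powr g" using True by (intro powr_mono2) auto
  then show ?thesis using \<open>0 \<le> t\<close> by simp
next
  case False
  assume "0 \<le> t" "0 < g" "g \<le> 1"
  then have "t powr g \<le> t powr 1" using False by (intro powr_mono) auto
  then show ?thesis using False by simp
qed

locale H =
  fixes Om :: "'m::finite pt set" and gam c0 :: real
  assumes gam_pos: "0 < gam" and gam_le1: "gam \<le> 1"
    and Om_open: "open Om" and Om_ne: "Om \<noteq> {}" and Om_bdd: "bounded Om"
    and c0_pos: "c0 > 0"
    and ahlfors: "\<forall>x\<in>closure Om. \<forall>r. 0 < r \<and> r \<le> diam_g gam Om \<longrightarrow>
                   measure lebesgue (ball_g gam x r \<inter> Om) \<ge> c0 * r powr n_gam gam TYPE('m)"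
begin

definition "D = diam_g gam Om"
definition "nn = n_gam gam TYPE('m)"
definition "B x r = Om \<inter> ball_g gam x r"
definition "m x r = measure lebesgue (B x r)"
definition "Cu = (2::real) ^ (CARD('m) + 1)"

lemma nn_pos: "nn \<ge> 1"
  using gam_pos by (simp add: nn_def n_gam_def)

lemma delta_bdd: "bdd_above {delta_g gam x y | x y. x \<in> Om \<and> y \<in> Om}"
proof -
  obtain M where M: "\<And>x. x \<in> Om \<Longrightarrow> norm x \<le> M"
    using Om_bdd by (auto simp: bounded_iff)
  have "delta_g gam x y \<le> 1 + 2 * M" if "x \<in> Om" "y \<in> Om" for x y
  proof -
    have n: "norm (x - y) \<le> 2 * M" using M[OF that(1)] M[OF that(2)] norm_triangle_ineq4[of x y] by linarith
    have xy: "x - y = (fst x - fst y, snd x - snd y)" by (simp add: prod_eq_iff)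
    have a: "norm (fst x - fst y) \<le> norm (x - y)"
      using norm_fst_le[of "fst x - fst y" "snd x - snd y"] xy by metis
    have b: "\<bar>snd x - snd y\<bar> \<le> norm (x - y)"
      using norm_snd_le[of "snd x - snd y" "fst x - fst y"] xy by (metis real_norm_def)
    have "norm (fst x - fst y) powr gam \<le> 1 + norm (fst x - fst y)"
      using gam_pos gam_le1 by (intro powr_le_one_plus) auto
    then show ?thesis using a b n unfolding delta_g_def by auto
  qed
  then show ?thesis by (auto intro!: bdd_aboveI[where M="1 + 2 * M"])
qed

lemma delta_le_D: "x \<in> Om \<Longrightarrow> y \<in> Om \<Longrightarrow> delta_g gam x y \<le> D"
  unfolding D_def diam_g_def by (rule cSup_upper[OF _ delta_bdd]) blast

lemma D_pos: "D > 0"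
proof -
  obtain x where x: "x \<in> Om" using Om_ne by auto
  obtain e where e: "e > 0" "ball x e \<subseteq> Om" using Om_open x open_contains_ball by blast
  define y where "y = x + (0, e/2)"
  have "dist x y < e" using e by (simp add: y_def dist_norm)
  then have y: "y \<in> Om" using e by auto
  have "y \<noteq> x" using e by (simp add: y_def prod_eq_iff)
  then have "0 < delta_g gam x y" using delta_g_pos[OF gam_pos, of x y] by metis
  also have "\<dots> \<le> D" using delta_le_D x y by auto
  finally show ?thesis .
qed

lemma ball_g_open: "open (ball_g gam x r)"
proof (cases "r > 0")
  case True then show ?thesis using gam_pos by (simp add: ball_g_eq open_Times)
next
  case False
  have "\<not> delta_g gam x y < r" for y using False delta_g_nonneg[of gam x y] by linarith
  then have "ball_g gam x r = {}" unfolding ball_g_def by blast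
  then show ?thesis by simp
qed

lemma Om_lmeas: "Om \<in> lmeasurable"
  using Om_bdd Om_open by (intro bounded_set_imp_lmeasurable) (auto simp: borel_open)

lemma B_lmeas: "B x r \<in> lmeasurable"
proof -
  have "open (B x r)" unfolding B_def using Om_open ball_g_open[of x r] by (intro open_Int)
  then have "B x r \<in> sets lebesgue" by (intro sets_completionI_sets borel_open) simp
  then show ?thesis using Om_bdd unfolding B_def
    by (intro bounded_set_imp_lmeasurable) (auto intro: bounded_subset)
qed

lemma B_sets: "B x r \<in> sets lebesgue"
  using B_lmeas by (simp add: fmeasurableD)

lemma Om_sets: "Om \<in> sets lebesgue"
  using Om_lmeas by (simp add: fmeasurableD)

lemma B_sub: "B x r \<subseteq> Om" by (auto simp: B_def)

lemma B_mono: "r \<le> s \<Longrightarrow> B x r \<subseteq> B x s"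
  by (auto simp: B_def ball_g_def)

lemma m_mono: "r \<le> s \<Longrightarrow> m x r \<le> m x s"
  unfolding m_def by (intro measure_mono_fmeasurable B_mono B_lmeas B_sets)

lemma m_nonneg: "0 \<le> m x r" by (simp add: m_def)

lemma m_lower: assumes "x \<in> Om" "s > 0" shows "c0 * (min s D) powr nn \<le> m x s"
proof -
  have "c0 * (min s D) powr nn \<le> m x (min s D)"
    using ahlfors assms D_pos closure_subset[of Om]
    unfolding m_def B_def D_def nn_def by (auto simp: Int_commute)
  also have "\<dots> \<le> m x s" by (intro m_mono) auto
  finally show ?thesis .
qed

lemma m_lower': assumes "x \<in> Om" "0 < s" "s \<le> D" shows "c0 * s powr nn \<le> m x s"
  using m_lower[OF assms(1,2)] assms(3) by auto

lemma m_pos: assumes "x \<in> Om" "s > 0" shows "0 < m x s"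
proof -
  have "0 < c0 * (min s D) powr nn" using c0_pos assms D_pos by auto
  then show ?thesis using m_lower[OF assms] by linarith
qed

lemma m_upper: assumes "r > 0" shows "m x r \<le> Cu * r powr nn"
proof -
  define rho where "rho = r powr (1/gam)"
  have rho: "rho \<ge> 0" by (simp add: rho_def)
  have sub: "B x r \<subseteq> cbox (fst x - rho *\<^sub>R One, snd x - r) (fst x + rho *\<^sub>R One, snd x + r)"
  proof
    fix y assume "y \<in> B x r"
    then have y: "y \<in> ball (fst x) rho \<times> {snd x - r <..< snd x + r}"
      using ball_g_eq[OF gam_pos assms, of x] unfolding B_def rho_def by blast
    then have ab: "\<bar>(fst y - fst x) \<bullet> i\<bar> \<le> rho" if "i \<in> Basis" for i
      using Basis_le_norm[OF that, of "fst y - fst x"] by (auto simp: dist_norm norm_minus_commute)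
    have "fst y \<in> cbox (fst x - rho *\<^sub>R One) (fst x + rho *\<^sub>R One)"
      unfolding mem_box
    proof
      fix i :: "real^'m" assume i: "i \<in> Basis"
      have e1: "(fst x - rho *\<^sub>R One) \<bullet> i = fst x \<bullet> i - rho" using i
        by (simp only: inner_diff_left inner_scaleR_left inner_sum_Basis mult_1_right)
      have e2: "(fst x + rho *\<^sub>R One) \<bullet> i = fst x \<bullet> i + rho" using i
        by (simp only: inner_add_left inner_scaleR_left inner_sum_Basis mult_1_right)
      show "(fst x - rho *\<^sub>R One) \<bullet> i \<le> fst y \<bullet> i \<and> fst y \<bullet> i \<le> (fst x + rho *\<^sub>R One) \<bullet> i"
        using ab[OF i] unfolding e1 e2 by (simp add: inner_diff_left abs_le_iff)
    qed
    moreover have "snd y \<in> cbox (snd x - r) (snd x + r)" using y by auto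
    ultimately show "y \<in> cbox (fst x - rho *\<^sub>R One, snd x - r) (fst x + rho *\<^sub>R One, snd x + r)"
      unfolding cbox_Pair_eq by (simp add: mem_Times_iff)
  qed
  have "m x r \<le> measure lebesgue (cbox (fst x - rho *\<^sub>R One, snd x - r) (fst x + rho *\<^sub>R One, snd x + r))"
    unfolding m_def by (intro measure_mono_fmeasurable sub B_sets) auto
  also have "\<dots> = (2 * rho) ^ CARD('m) * (2 * r)"
    using rho assms by (intro box_measure) auto
  also have "\<dots> = Cu * r powr nn"
  proof -
    have "rho ^ CARD('m) = r powr (real CARD('m) / gam)"
      using assms by (simp add: rho_def powr_realpow[symmetric] powr_powr)
    moreover have "r powr nn = r powr (real CARD('m) / gam) * r"
      using assms by (simp add: nn_def n_gam_def powr_add)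
    ultimately show ?thesis by (simp add: Cu_def power_mult_distrib)
  qed
  finally show ?thesis .
qed

end

lemma integrable_lebesgue_on_subset:
  fixes f :: "'a::euclidean_space \<Rightarrow> real"
  assumes "integrable (lebesgue_on T) f" "S \<subseteq> T" "S \<in> sets lebesgue" "T \<in> sets lebesgue"
  shows "integrable (lebesgue_on S) f"
proof -
  have "integrable lebesgue (\<lambda>x. if x \<in> T then f x else 0)"
    using assms(1) Lebesgue_Measure.integrable_restrict_UNIV[OF assms(4)] by blast
  then have "integrable lebesgue (\<lambda>x. indicator S x * (if x \<in> T then f x else 0))"
    using integrable_mult_indicator[OF assms(3), of "\<lambda>x. if x \<in> T then f x else 0"] by simp
  moreover have "(\<lambda>x. indicator S x * (if x \<in> T then f x else 0)) = (\<lambda>x. if x \<in> S then f x else 0)"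
    using assms(2) by (intro ext) (auto simp: indicator_def)
  ultimately show ?thesis using Lebesgue_Measure.integrable_restrict_UNIV[OF assms(3), of f] by simp
qed

lemma measure_lebesgue_on_space:
  "E \<in> sets lebesgue \<Longrightarrow> measure (lebesgue_on E) E = measure lebesgue E"
  by (intro measure_restrict_space) auto

lemma avg_sub_const:
  fixes f :: "'a::euclidean_space \<Rightarrow> real"
  assumes "E \<in> lmeasurable" "measure lebesgue E > 0" "integrable (lebesgue_on E) f"
  shows "avg E (\<lambda>y. f y - c) = avg E f - c"
proof -
  have fm: "finite_measure (lebesgue_on E)" using assms(1) by (rule finite_measure_lebesgue_on)
  have E: "E \<in> sets lebesgue" using assms(1) by (simp add: fmeasurableD)
  have "(\<integral>y. f y - c \<partial>lebesgue_on E) = (\<integral>y. f y \<partial>lebesgue_on E) - (\<integral>y. c \<partial>lebesgue_on E)"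
    by (rule Bochner_Integration.integral_diff) (use assms finite_measure.integrable_const[OF fm] in auto)
  also have "(\<integral>y. c \<partial>lebesgue_on E) = measure lebesgue E * c"
    using E by (simp add: measure_lebesgue_on_space)
  finally have "(\<integral>y. f y - c \<partial>lebesgue_on E) = (\<integral>y. f y \<partial>lebesgue_on E) - measure lebesgue E * c" .
  then show ?thesis using assms unfolding avg_def by (simp add: field_simps)
qed

lemma avg_abs: "\<bar>avg E f\<bar> \<le> avg E (\<lambda>y. \<bar>f y\<bar>)"
proof -
  have "\<bar>1 / measure lebesgue E\<bar> = 1 / measure lebesgue E" by simp
  then show ?thesis unfolding avg_def abs_mult
    by (metis integral_abs_bound mult_left_mono abs_ge_zero)
qed

lemma int_eq_avg:
  assumes "measure lebesgue E > 0"
  shows "(\<integral>y. f y \<partial>lebesgue_on E) = measure lebesgue E * avg E f"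
  using assms unfolding avg_def by simp

context H
begin

definition "Q = Cu * 2 powr nn / c0"

lemma Cu_pos: "Cu > 0" by (simp add: Cu_def)
lemma Q_pos: "Q > 0" using Cu_pos c0_pos by (simp add: Q_def)

lemma ratio_half:
  assumes x: "x \<in> Om" and s: "0 < s" "s \<le> r" "r \<le> 2 * s" "r \<le> 2 * D"
  shows "m x r \<le> Q * m x s"
proof -
  have r: "r > 0" using s by auto
  have up: "m x r \<le> Cu * r powr nn" by (rule m_upper[OF r])
  have low: "c0 * (min s D) powr nn \<le> m x s" by (rule m_lower[OF x s(1)])
  have "r \<le> 2 * min s D" using s by auto
  then have "r powr nn \<le> (2 * min s D) powr nn"
    using r nn_pos by (intro powr_mono2) auto
  also have "\<dots> = 2 powr nn * (min s D) powr nn"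
    using s D_pos by (simp add: powr_mult)
  finally have "Cu * r powr nn \<le> Cu * 2 powr nn * (min s D) powr nn"
    using Cu_pos by (simp add: mult.assoc)
  also have "\<dots> = Q * (c0 * (min s D) powr nn)"
    using c0_pos by (simp add: Q_def)
  also have "\<dots> \<le> Q * m x s" using low Q_pos by (intro mult_left_mono) auto
  finally show ?thesis using up by linarith
qed

end

locale HC = H Om gam c0 for Om :: "'m::finite pt set" and gam c0 :: real +
  fixes f :: "'m pt \<Rightarrow> real" and K al :: real
  assumes fint: "integrable (lebesgue_on Om) f"
    and K: "K \<ge> 0" and al: "al > 0"
    and camp: "\<And>x r. x \<in> Om \<Longrightarrow> 0 < r \<Longrightarrow> r \<le> 2 * D \<Longrightarrow>
       avg (B x r) (\<lambda>y. \<bar>f y - avg (B x r) f\<bar>) \<le> K * r powr al"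
begin

definition "a x r = avg (B x r) f"

lemma fint_B: "integrable (lebesgue_on (B x r)) f"
  using fint B_sub B_sets Om_sets by (rule integrable_lebesgue_on_subset)

lemma compare:
  assumes x: "x \<in> Om" and y: "y \<in> Om" and s: "0 < s" and r: "0 < r" "r \<le> 2 * D"
    and sub: "B y s \<subseteq> B x r" and rat: "m x r \<le> Q * m y s"
  shows "\<bar>a y s - a x r\<bar> \<le> Q * K * r powr al"
proof -
  define c where "c = a x r"
  have mys: "m y s > 0" by (rule m_pos[OF y s])
  have mxr: "m x r > 0" by (rule m_pos[OF x r(1)])
  have "a y s - c = avg (B y s) (\<lambda>z. f z - c)"
    unfolding a_def using mys fint_B B_lmeas by (subst avg_sub_const) (auto simp: m_def)
  then have "\<bar>a y s - c\<bar> \<le> avg (B y s) (\<lambda>z. \<bar>f z - c\<bar>)"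
    using avg_abs by metis
  also have "\<dots> = (1 / m y s) * (\<integral>z. \<bar>f z - c\<bar> \<partial>lebesgue_on (B y s))"
    by (simp add: avg_def m_def)
  also have "\<dots> \<le> (1 / m y s) * (\<integral>z. \<bar>f z - c\<bar> \<partial>lebesgue_on (B x r))"
  proof (intro mult_left_mono)
    show "(\<integral>z. \<bar>f z - c\<bar> \<partial>lebesgue_on (B y s)) \<le> (\<integral>z. \<bar>f z - c\<bar> \<partial>lebesgue_on (B x r))"
    proof (rule integral_mono_lebesgue_on_AE)
      have "finite_measure (lebesgue_on (B x r))" using B_lmeas by (rule finite_measure_lebesgue_on)
      then show "integrable (lebesgue_on (B x r)) (\<lambda>z. \<bar>f z - c\<bar>)"
        using fint_B by (intro integrable_abs Bochner_Integration.integrable_diff)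
          (auto intro: finite_measure.integrable_const)
    qed (use sub B_sets in auto)
  qed (use mys in auto)
  also have "(\<integral>z. \<bar>f z - c\<bar> \<partial>lebesgue_on (B x r)) = m x r * avg (B x r) (\<lambda>z. \<bar>f z - c\<bar>)"
    using mxr unfolding m_def by (rule int_eq_avg)
  finally have 1: "\<bar>a y s - c\<bar> \<le> (1 / m y s) * (m x r * avg (B x r) (\<lambda>z. \<bar>f z - c\<bar>))" .
  have 2: "avg (B x r) (\<lambda>z. \<bar>f z - c\<bar>) \<le> K * r powr al"
    unfolding c_def a_def by (rule camp[OF x r])
  have "(1 / m y s) * (m x r * avg (B x r) (\<lambda>z. \<bar>f z - c\<bar>)) \<le> (1 / m y s) * (m x r * (K * r powr al))"
    using 2 mys mxr by (intro mult_left_mono) auto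
  then have "\<bar>a y s - c\<bar> \<le> (1 / m y s) * (m x r * (K * r powr al))" using 1 by linarith
  also have "\<dots> = (m x r / m y s) * (K * r powr al)" by simp
  also have "\<dots> \<le> Q * (K * r powr al)"
    using rat mys K by (intro mult_right_mono) (auto simp: divide_le_eq)
  finally show ?thesis by (simp add: c_def mult.assoc)
qed

end

context HC
begin

definition "qa = (1/2::real) powr al"
definition "Sg = 1 / (1 - qa)"
definition "C3 = Q * Sg"
definition "C4 = (2 * C3 + Q) * 2 powr al"

lemma qa_bounds: "0 < qa" "qa < 1"
  using al by (auto simp: qa_def powr01_less_one)

lemma Sg_ge1: "Sg \<ge> 1"
  using qa_bounds by (simp add: Sg_def)

lemma Sg_eq: "1 + qa * Sg = Sg"
  using qa_bounds by (simp add: Sg_def field_simps)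

lemma C3_nonneg: "C3 \<ge> 0" using Q_pos Sg_ge1 by (simp add: C3_def)
lemma C4_nonneg: "C4 \<ge> 0" using Q_pos C3_nonneg by (simp add: C4_def)

lemma half_powr: "r \<ge> 0 \<Longrightarrow> (r / 2) powr al = r powr al * qa"
proof -
  assume r: "r \<ge> 0"
  have "(r / 2) powr al = (r * (1/2)) powr al" by simp
  also have "\<dots> = r powr al * (1/2) powr al" by (rule powr_mult)
  finally show ?thesis by (simp add: qa_def)
qed

lemma chain_k:
  "\<forall>r s. x \<in> Om \<longrightarrow> 0 < s \<longrightarrow> s \<le> r \<longrightarrow> r \<le> 2 * D \<longrightarrow> r * (1/2)^k \<le> s \<longrightarrow>
     \<bar>a x s - a x r\<bar> \<le> Q * K * r powr al * Sg"
proof (induction k)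
  case 0
  show ?case
  proof (intro allI impI)
    fix r s assume "x \<in> Om" "0 < s" "s \<le> r" "r \<le> 2 * D" "r * (1/2)^0 \<le> s"
    then have "s = r" by simp
    then show "\<bar>a x s - a x r\<bar> \<le> Q * K * r powr al * Sg"
      using Q_pos K Sg_ge1 by simp
  qed
next
  case (Suc k)
  show ?case
  proof (intro allI impI)
    fix r s assume x: "x \<in> Om" and s: "0 < s" "s \<le> r" "r \<le> 2 * D" and rk: "r * (1/2)^Suc k \<le> s"
    have QK: "0 \<le> Q * K * r powr al" using Q_pos K by simp
    show "\<bar>a x s - a x r\<bar> \<le> Q * K * r powr al * Sg"
    proof (cases "r \<le> 2 * s")
      case True
      have "\<bar>a x s - a x r\<bar> \<le> Q * K * r powr al"
        using s by (intro compare[OF x x s(1)] B_mono ratio_half[OF x s(1,2) True s(3)]) auto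
      also have "\<dots> \<le> Q * K * r powr al * Sg" using QK Sg_ge1 by (simp add: mult_le_cancel_left1)
      finally show ?thesis .
    next
      case False
      have r2: "0 < r / 2" "s \<le> r / 2" "r / 2 \<le> 2 * D" "r / 2 * (1/2)^k \<le> s"
        using False s rk by auto
      have ih: "\<bar>a x s - a x (r/2)\<bar> \<le> Q * K * (r/2) powr al * Sg"
        using Suc.IH x s(1) r2 by blast
      have st: "\<bar>a x (r/2) - a x r\<bar> \<le> Q * K * r powr al"
        using s r2 by (intro compare[OF x x r2(1)] B_mono ratio_half[OF x r2(1)]) auto
      have "\<bar>a x s - a x r\<bar> \<le> Q * K * (r/2) powr al * Sg + Q * K * r powr al"
        using ih st by linarith
      also have "\<dots> = Q * K * r powr al * (1 + qa * Sg)"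
        using s by (simp add: half_powr algebra_simps)
      also have "\<dots> = Q * K * r powr al * Sg" by (simp add: Sg_eq)
      finally show ?thesis .
    qed
  qed
qed

lemma chain:
  assumes x: "x \<in> Om" and s: "0 < s" "s \<le> r" "r \<le> 2 * D"
  shows "\<bar>a x s - a x r\<bar> \<le> C3 * K * r powr al"
proof -
  have r: "r > 0" using s by auto
  obtain k where k: "(1/2::real)^k < s / r" using real_arch_pow_inv[of "s/r" "1/2"] s r by auto
  then have "r * (1/2)^k \<le> s" using r by (simp add: field_simps)
  then have "\<bar>a x s - a x r\<bar> \<le> Q * K * r powr al * Sg" using chain_k[of x k] x s by blast
  then show ?thesis by (simp add: C3_def algebra_simps)
qed

definition "rk k = 2 * D * (1/2::real)^k"
definition "hh x = lim (\<lambda>k. a x (rk k))"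

lemma rk_pos: "rk k > 0" using D_pos by (simp add: rk_def)
lemma rk_le: "rk k \<le> 2 * D" using D_pos by (simp add: rk_def power_le_one mult_left_le)
lemma rk_mono: "k \<le> l \<Longrightarrow> rk l \<le> rk k"
  using D_pos by (simp add: rk_def power_decreasing)

lemma rk_powr: "rk k powr al = (2 * D) powr al * qa ^ k"
proof -
  have "rk k powr al = (2 * D) powr al * ((1/2::real)^k) powr al"
    by (simp add: rk_def powr_mult)
  also have "((1/2::real)^k) powr al = qa ^ k"
    unfolding qa_def by (simp add: powr_realpow[symmetric] powr_powr mult.commute)
  finally show ?thesis .
qed

lemma rk_small: "r > 0 \<Longrightarrow> \<exists>N. \<forall>k\<ge>N. rk k \<le> r"
proof -
  assume r: "r > 0"
  obtain N where N: "(1/2::real)^N < r / (2 * D)" using real_arch_pow_inv[of "r / (2*D)" "1/2"] r D_pos by auto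
  have "rk k \<le> r" if "k \<ge> N" for k
  proof -
    have "rk k \<le> rk N" using that by (rule rk_mono)
    also have "rk N \<le> r" using N D_pos by (simp add: rk_def field_simps)
    finally show ?thesis .
  qed
  then show ?thesis by blast
qed

lemma conv: assumes x: "x \<in> Om" shows "convergent (\<lambda>k. a x (rk k))"
proof -
  define M where "M = C3 * K * (2 * D) powr al"
  have M: "M \<ge> 0" using C3_nonneg K by (simp add: M_def)
  have bd: "\<bar>a x (rk l) - a x (rk k)\<bar> \<le> M * qa ^ k" if "k \<le> l" for k l
  proof -
    have "\<bar>a x (rk l) - a x (rk k)\<bar> \<le> C3 * K * rk k powr al"
      using chain[OF x rk_pos rk_mono[OF that] rk_le] .
    also have "\<dots> = M * qa ^ k" by (simp add: rk_powr M_def)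
    finally show ?thesis .
  qed
  have "Cauchy (\<lambda>k. a x (rk k))"
  proof (rule metric_CauchyI)
    fix e :: real assume e: "e > 0"
    obtain N where N: "qa ^ N < e / (M + 1)"
      using real_arch_pow_inv[of "e / (M + 1)" qa] e M qa_bounds by auto
    have "M * qa ^ N < e"
    proof -
      have "M * qa ^ N \<le> (M + 1) * qa ^ N" using qa_bounds by (simp add: mult_right_mono)
      also have "\<dots> < (M + 1) * (e / (M + 1))" using N M by (intro mult_strict_left_mono) auto
      also have "\<dots> = e" using M by simp
      finally show ?thesis .
    qed
    have "dist (a x (rk k)) (a x (rk l)) < e" if "k \<ge> N" "l \<ge> N" for k l
    proof -
      have "\<bar>a x (rk k) - a x (rk l)\<bar> \<le> M * qa ^ N"
      proof (cases "k \<le> l")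
        case True
        have "\<bar>a x (rk l) - a x (rk k)\<bar> \<le> M * qa ^ k" by (rule bd[OF True])
        also have "\<dots> \<le> M * qa ^ N" using M qa_bounds that
          by (intro mult_left_mono power_decreasing) auto
        finally show ?thesis by (simp add: abs_minus_commute)
      next
        case False
        have "\<bar>a x (rk k) - a x (rk l)\<bar> \<le> M * qa ^ l" using False by (intro bd) auto
        also have "\<dots> \<le> M * qa ^ N" using M qa_bounds that
          by (intro mult_left_mono power_decreasing) auto
        finally show ?thesis .
      qed
      then show ?thesis using \<open>M * qa ^ N < e\<close> by (simp add: dist_real_def)
    qed
    then show "\<exists>N. \<forall>m\<ge>N. \<forall>n\<ge>N. dist (a x (rk m)) (a x (rk n)) < e" by blast
  qed
  then show ?thesis by (simp add: Cauchy_convergent_iff)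
qed

lemma hh_approx:
  assumes x: "x \<in> Om" and r: "0 < r" "r \<le> 2 * D"
  shows "\<bar>hh x - a x r\<bar> \<le> C3 * K * r powr al"
proof -
  have lim: "(\<lambda>k. a x (rk k)) \<longlonglongrightarrow> hh x"
    using conv[OF x] unfolding hh_def by (simp add: convergent_LIMSEQ_iff)
  then have lim2: "(\<lambda>k. \<bar>a x (rk k) - a x r\<bar>) \<longlonglongrightarrow> \<bar>hh x - a x r\<bar>"
    by (intro tendsto_intros)
  obtain N where N: "\<forall>k\<ge>N. rk k \<le> r" using rk_small[OF r(1)] by blast
  have "eventually (\<lambda>k. \<bar>a x (rk k) - a x r\<bar> \<le> C3 * K * r powr al) sequentially"
    using N by (intro eventually_sequentiallyI[of N]) (use chain[OF x rk_pos _ r(2)] in blast)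
  then show ?thesis using lim2 by (intro tendsto_upperbound) auto
qed

lemma hh_holder:
  assumes x: "x \<in> Om" and y: "y \<in> Om"
  shows "\<bar>hh x - hh y\<bar> \<le> C4 * K * delta_g gam x y powr al"
proof (cases "x = y")
  case True then show ?thesis using C4_nonneg K by simp
next
  case False
  define rho where "rho = delta_g gam x y"
  have rho: "0 < rho" "rho \<le> D" using delta_g_pos[OF gam_pos False] delta_le_D[OF x y]
    by (auto simp: rho_def)
  have sub: "B y rho \<subseteq> B x (2 * rho)"
  proof
    fix z assume "z \<in> B y rho"
    then have z: "z \<in> Om" "delta_g gam y z < rho" by (auto simp: B_def ball_g_def)
    have "delta_g gam x z \<le> delta_g gam x y + delta_g gam y z"
      by (rule delta_g_triangle[OF gam_pos gam_le1])
    then have "delta_g gam x z < 2 * rho" using z by (simp add: rho_def)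
    then show "z \<in> B x (2 * rho)" using z by (auto simp: B_def ball_g_def)
  qed
  have rat: "m x (2 * rho) \<le> Q * m y rho"
  proof -
    have "m x (2 * rho) \<le> Cu * (2 * rho) powr nn" using rho by (intro m_upper) auto
    also have "\<dots> = Q * (c0 * rho powr nn)"
      using c0_pos by (simp add: Q_def powr_mult)
    also have "\<dots> \<le> Q * m y rho" using m_lower'[OF y rho(1,2)] Q_pos by (intro mult_left_mono) auto
    finally show ?thesis .
  qed
  have 1: "\<bar>a y rho - a x (2 * rho)\<bar> \<le> Q * K * (2 * rho) powr al"
    using rho by (intro compare[OF x y rho(1) _ _ sub rat]) auto
  have 2: "\<bar>hh x - a x (2 * rho)\<bar> \<le> C3 * K * (2 * rho) powr al"
    using rho by (intro hh_approx[OF x]) auto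
  have 3: "\<bar>hh y - a y rho\<bar> \<le> C3 * K * rho powr al"
    using rho by (intro hh_approx[OF y]) auto
  have "rho powr al \<le> (2 * rho) powr al" using rho al by (intro powr_mono2) auto
  then have 4: "C3 * K * rho powr al \<le> C3 * K * (2 * rho) powr al"
    using C3_nonneg K by (intro mult_left_mono) auto
  have "\<bar>hh x - hh y\<bar> \<le> (2 * C3 + Q) * K * (2 * rho) powr al"
    using 1 2 3 4 by (simp add: algebra_simps)
  also have "\<dots> = C4 * K * rho powr al" by (simp add: C4_def powr_mult)
  finally show ?thesis by (simp add: rho_def)
qed

end

context HC
begin

lemma hh_cont: "continuous_on Om hh"
  unfolding continuous_on_def
proof
  fix x assume x: "x \<in> Om"
  define G where "G y = norm (fst y - fst x) powr gam + \<bar>snd y - snd x\<bar>" for y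
  have n0: "((\<lambda>y. norm (fst y - fst x)) \<longlongrightarrow> 0) (at x within Om)"
  proof -
    have "((\<lambda>y. norm (fst y - fst x)) \<longlongrightarrow> norm (fst x - fst x)) (at x within Om)"
      by (intro tendsto_intros)
    then show ?thesis by simp
  qed
  have n1: "((\<lambda>y. norm (fst y - fst x) powr gam) \<longlongrightarrow> 0) (at x within Om)"
    by (rule tendsto_zero_powrI[OF n0]) (use gam_pos in auto)
  have n2: "((\<lambda>y. \<bar>snd y - snd x\<bar>) \<longlongrightarrow> 0) (at x within Om)"
  proof -
    have "((\<lambda>y. \<bar>snd y - snd x\<bar>) \<longlongrightarrow> \<bar>snd x - snd x\<bar>) (at x within Om)"
      by (intro tendsto_intros)
    then show ?thesis by simp
  qed
  have G0: "(G \<longlongrightarrow> 0) (at x within Om)"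
    unfolding G_def using tendsto_add[OF n1 n2] by simp
  have GP: "((\<lambda>y. C4 * K * G y powr al) \<longlongrightarrow> 0) (at x within Om)"
  proof -
    have "((\<lambda>y. G y powr al) \<longlongrightarrow> 0) (at x within Om)"
      by (rule tendsto_zero_powrI[OF G0]) (use al in \<open>auto simp: G_def\<close>)
    then show ?thesis using tendsto_mult_left[of _ 0 _ "C4 * K"] by fastforce
  qed
  have ev: "\<forall>\<^sub>F y in at x within Om. norm (hh y - hh x) \<le> C4 * K * G y powr al"
  proof -
    have "\<forall>\<^sub>F y in at x within Om. y \<in> Om" by (simp add: eventually_at_filter)
    then show ?thesis
    proof (rule eventually_mono)
      fix y assume y: "y \<in> Om"
      have "\<bar>hh y - hh x\<bar> \<le> C4 * K * delta_g gam y x powr al" by (rule hh_holder[OF y x])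
      also have "\<dots> \<le> C4 * K * G y powr al"
        using C4_nonneg K al delta_g_le_sum[of gam y x] delta_g_nonneg[of gam y x]
        by (intro mult_left_mono powr_mono2) (auto simp: G_def)
      finally show "norm (hh y - hh x) \<le> C4 * K * G y powr al" by simp
    qed
  qed
  have "((\<lambda>y. hh y - hh x) \<longlongrightarrow> 0) (at x within Om)"
    by (rule Lim_null_comparison[OF ev GP])
  then have "((\<lambda>y. (hh y - hh x) + hh x) \<longlongrightarrow> 0 + hh x) (at x within Om)"
    by (intro tendsto_add) auto
  then show "(hh \<longlongrightarrow> hh x) (at x within Om)" by simp
qed

lemma hh_meas: "hh \<in> borel_measurable (lebesgue_on Om)"
  by (rule continuous_imp_measurable_on_sets_lebesgue[OF hh_cont Om_sets])

lemma hh_bdd: "\<exists>M. \<forall>y\<in>Om. \<bar>hh y\<bar> \<le> M"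
proof -
  obtain x0 where x0: "x0 \<in> Om" using Om_ne by auto
  have "\<bar>hh y\<bar> \<le> \<bar>hh x0\<bar> + C4 * K * D powr al" if y: "y \<in> Om" for y
  proof -
    have "\<bar>hh y - hh x0\<bar> \<le> C4 * K * delta_g gam y x0 powr al" by (rule hh_holder[OF y x0])
    also have "\<dots> \<le> C4 * K * D powr al"
      using C4_nonneg K al delta_le_D[OF y x0] delta_g_nonneg[of gam y x0]
      by (intro mult_left_mono powr_mono2) auto
    finally show ?thesis by linarith
  qed
  then show ?thesis by blast
qed

lemma diff_int: "integrable (lebesgue_on Om) (\<lambda>y. \<bar>f y - hh y\<bar>)"
proof -
  obtain M where M: "\<forall>y\<in>Om. \<bar>hh y\<bar> \<le> M" using hh_bdd by blast
  have fm: "finite_measure (lebesgue_on Om)" using Om_lmeas by (rule finite_measure_lebesgue_on)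
  have "integrable (lebesgue_on Om) hh"
    by (rule finite_measure.integrable_const_bound[OF fm _ hh_meas, of M])
       (use M in \<open>auto intro!: AE_I2\<close>)
  then show ?thesis using fint by (intro integrable_abs Bochner_Integration.integrable_diff)
qed

end

context HC
begin

definition "C5 = 1 + C3 + C4"

lemma int_ball:
  assumes x: "x \<in> Om" and r: "0 < r" "r \<le> 2 * D"
  shows "(\<integral>y. \<bar>f y - hh y\<bar> \<partial>lebesgue_on (B x r)) \<le> C5 * K * r powr al * m x r"
proof -
  define c where "c = a x r"
  define L where "L = (C3 + C4) * K * r powr al"
  have mxr: "m x r > 0" by (rule m_pos[OF x r(1)])
  have fm: "finite_measure (lebesgue_on (B x r))" using B_lmeas by (rule finite_measure_lebesgue_on)
  have i1: "integrable (lebesgue_on (B x r)) (\<lambda>y. \<bar>f y - c\<bar>)"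
    using fint_B by (intro integrable_abs Bochner_Integration.integrable_diff)
      (auto intro: finite_measure.integrable_const[OF fm])
  have i2: "integrable (lebesgue_on (B x r)) (\<lambda>y. \<bar>f y - c\<bar> + L)"
    using i1 by (intro Bochner_Integration.integrable_add) (auto intro: finite_measure.integrable_const[OF fm])
  have pw: "\<bar>f y - hh y\<bar> \<le> \<bar>f y - c\<bar> + L" if y: "y \<in> B x r" for y
  proof -
    have yO: "y \<in> Om" and dy: "delta_g gam x y < r" using y by (auto simp: B_def ball_g_def)
    have 1: "\<bar>hh x - c\<bar> \<le> C3 * K * r powr al" unfolding c_def by (rule hh_approx[OF x r])
    have "\<bar>hh x - hh y\<bar> \<le> C4 * K * delta_g gam x y powr al" by (rule hh_holder[OF x yO])
    also have "\<dots> \<le> C4 * K * r powr al"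
      using C4_nonneg K al dy delta_g_nonneg[of gam x y] by (intro mult_left_mono powr_mono2) auto
    finally have 2: "\<bar>hh x - hh y\<bar> \<le> C4 * K * r powr al" .
    show ?thesis using 1 2 by (simp add: L_def algebra_simps)
  qed
  have "(\<integral>y. \<bar>f y - hh y\<bar> \<partial>lebesgue_on (B x r)) \<le> (\<integral>y. \<bar>f y - c\<bar> + L \<partial>lebesgue_on (B x r))"
  proof (rule integral_mono_AE'[OF i2])
    show "AE y in lebesgue_on (B x r). \<bar>f y - hh y\<bar> \<le> \<bar>f y - c\<bar> + L"
      by (rule AE_I2) (use pw in auto)
    show "AE y in lebesgue_on (B x r). 0 \<le> \<bar>f y - c\<bar> + L"
      using C3_nonneg C4_nonneg K by (intro AE_I2) (auto simp: L_def)
  qed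
  also have "\<dots> = (\<integral>y. \<bar>f y - c\<bar> \<partial>lebesgue_on (B x r)) + m x r * L"
    using i1 B_sets by (simp add: Bochner_Integration.integral_add finite_measure.integrable_const[OF fm]
        measure_lebesgue_on_space m_def)
  also have "(\<integral>y. \<bar>f y - c\<bar> \<partial>lebesgue_on (B x r)) = m x r * avg (B x r) (\<lambda>y. \<bar>f y - c\<bar>)"
    using mxr unfolding m_def by (rule int_eq_avg)
  finally have 1: "(\<integral>y. \<bar>f y - hh y\<bar> \<partial>lebesgue_on (B x r))
      \<le> m x r * avg (B x r) (\<lambda>y. \<bar>f y - c\<bar>) + m x r * L" .
  have 2: "avg (B x r) (\<lambda>y. \<bar>f y - c\<bar>) \<le> K * r powr al"
    unfolding c_def a_def by (rule camp[OF x r])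
  have "m x r * avg (B x r) (\<lambda>y. \<bar>f y - c\<bar>) \<le> m x r * (K * r powr al)"
    using 2 mxr by (intro mult_left_mono) auto
  then have "(\<integral>y. \<bar>f y - hh y\<bar> \<partial>lebesgue_on (B x r)) \<le> m x r * (K * r powr al) + m x r * L"
    using 1 by linarith
  also have "\<dots> = C5 * K * r powr al * m x r" by (simp add: L_def C5_def algebra_simps)
  finally show ?thesis .
qed

end

context H
begin

definition "sep r P \<longleftrightarrow> P \<subseteq> Om \<and> (\<forall>p\<in>P. \<forall>q\<in>P. p \<noteq> q \<longrightarrow> r \<le> delta_g gam p q)"

lemma card_bound:
  assumes r: "0 < r" "r \<le> D" and P: "finite P" "sep r P"
  shows "real (card P) * (c0 * (r/2) powr nn) \<le> measure lebesgue Om"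
proof -
  have disj: "pairwise (\<lambda>p q. disjnt (B p (r/2)) (B q (r/2))) P"
  proof (rule pairwiseI)
    fix p q assume pq: "p \<in> P" "q \<in> P" "p \<noteq> q"
    show "disjnt (B p (r/2)) (B q (r/2))"
    proof (rule ccontr)
      assume "\<not> disjnt (B p (r/2)) (B q (r/2))"
      then obtain z where "z \<in> B p (r/2)" "z \<in> B q (r/2)" by (auto simp: disjnt_def)
      then have z: "delta_g gam p z < r/2" "delta_g gam q z < r/2" by (auto simp: B_def ball_g_def)
      have "delta_g gam p q \<le> delta_g gam p z + delta_g gam z q"
        by (rule delta_g_triangle[OF gam_pos gam_le1])
      also have "\<dots> < r" using z delta_g_sym[of gam z q] by linarith
      finally show False using P(2) pq unfolding sep_def by force
    qed
  qed
  have "measure lebesgue (\<Union>p\<in>P. B p (r/2)) = (\<Sum>p\<in>P. m p (r/2))"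
    unfolding m_def by (rule measure_UNION'[OF P(1) _ disj]) (rule B_lmeas)
  moreover have "measure lebesgue (\<Union>p\<in>P. B p (r/2)) \<le> measure lebesgue Om"
    using B_sub by (intro measure_mono_fmeasurable Om_lmeas) (auto intro!: sets.finite_UN B_sets P(1))
  moreover have "(\<Sum>p\<in>P. c0 * (r/2) powr nn) \<le> (\<Sum>p\<in>P. m p (r/2))"
    using P r by (intro sum_mono m_lower') (auto simp: sep_def)
  ultimately show ?thesis by simp
qed

lemma cover:
  assumes r: "0 < r" "r \<le> D"
  shows "\<exists>P. finite P \<and> P \<subseteq> Om \<and> real (card P) * (c0 * (r/2) powr nn) \<le> measure lebesgue Om
           \<and> (\<forall>y\<in>Om. \<exists>p\<in>P. y \<in> B p r)"
proof -
  define w where "w = c0 * (r/2) powr nn"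
  have w: "w > 0" using c0_pos r by (simp add: w_def)
  define Nb where "Nb = nat (ceiling (measure lebesgue Om / w)) + 1"
  have bnd: "\<forall>P. finite P \<and> sep r P \<longrightarrow> card P < Nb"
  proof (intro allI impI)
    fix P assume PP: "finite P \<and> sep r P"
    then have "real (card P) * w \<le> measure lebesgue Om"
      unfolding w_def using card_bound[OF r] by blast
    then have "real (card P) \<le> measure lebesgue Om / w" using w by (simp add: field_simps)
    moreover have "measure lebesgue Om / w \<le> real (nat (ceiling (measure lebesgue Om / w)))"
    proof -
      have "measure lebesgue Om / w \<le> of_int (ceiling (measure lebesgue Om / w))"
        by (rule le_of_int_ceiling)
      moreover have "(of_int (ceiling (measure lebesgue Om / w)) :: real) \<le> real (nat (ceiling (measure lebesgue Om / w)))"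
        by (cases "ceiling (measure lebesgue Om / w) \<ge> 0") auto
      ultimately show ?thesis by linarith
    qed
    ultimately have "real (card P) \<le> real (nat (ceiling (measure lebesgue Om / w)))" by linarith
    then have "real (card P) < real Nb" unfolding Nb_def by linarith
    then show "card P < Nb" by simp
  qed
  have e: "finite {} \<and> sep r {}" by (simp add: sep_def)
  obtain P where P: "finite P" "sep r P" and mx: "\<And>P'. finite P' \<and> sep r P' \<Longrightarrow> card P' \<le> card P"
    using ex_has_greatest_nat[of "\<lambda>P. finite P \<and> sep r P" "{}" card Nb, OF e bnd] by blast
  have cov: "\<exists>p\<in>P. y \<in> B p r" if y: "y \<in> Om" for y
  proof (rule ccontr)
    assume "\<not> (\<exists>p\<in>P. y \<in> B p r)"
    then have far: "\<forall>p\<in>P. r \<le> delta_g gam p y" using y by (auto simp: B_def ball_g_def not_less)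
    have yP: "y \<notin> P" using far r delta_g_self[OF gam_pos, of y] by force
    have "sep r (insert y P)" unfolding sep_def
    proof (intro conjI ballI impI)
      show "insert y P \<subseteq> Om" using P(2) y by (auto simp: sep_def)
    next
      fix p q assume pq: "p \<in> insert y P" "q \<in> insert y P" "p \<noteq> q"
      show "r \<le> delta_g gam p q"
      proof (cases "p = y")
        case True
        then have "q \<in> P" using pq by auto
        then show ?thesis using far True delta_g_sym[of gam y q] by auto
      next
        case False
        then have p: "p \<in> P" using pq by auto
        show ?thesis
        proof (cases "q = y")
          case True then show ?thesis using far p by auto
        next
          case False then have "q \<in> P" using pq by auto
          then show ?thesis using P(2) p pq(3) unfolding sep_def by blast
        qed
      qed
    qed
    then have "card (insert y P) \<le> card P" using mx P(1) by blast
    then show False using yP P(1) by simp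
  qed
  show ?thesis using P cov card_bound[OF r P] by (auto simp: sep_def)
qed

end

context HC
begin

definition "Etot = measure lebesgue Om * Cu * 2 powr nn * C5 * K / c0"

lemma C5_nonneg: "C5 \<ge> 0" using C3_nonneg C4_nonneg by (simp add: C5_def)

lemma total_int:
  assumes r: "0 < r" "r \<le> D"
  shows "(\<integral>y. \<bar>f y - hh y\<bar> \<partial>lebesgue_on Om) \<le> Etot * r powr al"
proof -
  obtain P where P: "finite P" "P \<subseteq> Om" and cP: "real (card P) * (c0 * (r/2) powr nn) \<le> measure lebesgue Om"
    and cov: "\<forall>y\<in>Om. \<exists>p\<in>P. y \<in> B p r"
    using cover[OF r] by blast
  define phi where "phi y = \<bar>f y - hh y\<bar>" for y
  have phi0: "phi y \<ge> 0" for y by (simp add: phi_def)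
  have intB: "integrable (lebesgue_on (B p r)) phi" for p
    unfolding phi_def by (rule integrable_lebesgue_on_subset[OF diff_int B_sub B_sets Om_sets])
  have intU: "integrable lebesgue (\<lambda>y. if y \<in> B p r then phi y else 0)" for p
    using intB[of p] Lebesgue_Measure.integrable_restrict_UNIV[OF B_sets[of p r], of phi] by simp
  have "(\<integral>y. phi y \<partial>lebesgue_on Om) = (\<integral>y. (if y \<in> Om then phi y else 0) \<partial>lebesgue)"
    by (rule Lebesgue_Measure.integral_restrict_UNIV[OF Om_sets, symmetric])
  also have "\<dots> \<le> (\<integral>y. (\<Sum>p\<in>P. if y \<in> B p r then phi y else 0) \<partial>lebesgue)"
  proof (rule integral_mono_AE')
    show "integrable lebesgue (\<lambda>y. \<Sum>p\<in>P. if y \<in> B p r then phi y else 0)"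
      using intU by (intro Bochner_Integration.integrable_sum) auto
    show "AE y in lebesgue. (if y \<in> Om then phi y else 0) \<le> (\<Sum>p\<in>P. if y \<in> B p r then phi y else 0)"
    proof (rule AE_I2)
      fix y
      show "(if y \<in> Om then phi y else 0) \<le> (\<Sum>p\<in>P. if y \<in> B p r then phi y else 0)"
      proof (cases "y \<in> Om")
        case True
        then obtain p where p: "p \<in> P" "y \<in> B p r" using cov by blast
        have "phi y = (if y \<in> B p r then phi y else 0)" using p by simp
        also have "\<dots> \<le> (\<Sum>p\<in>P. if y \<in> B p r then phi y else 0)"
          by (rule member_le_sum[OF p(1)]) (use phi0 P(1) in auto)
        finally show ?thesis using True by simp
      next
        case False then show ?thesis using phi0 by (simp add: sum_nonneg)
      qed
    qed
    show "AE y in lebesgue. 0 \<le> (\<Sum>p\<in>P. if y \<in> B p r then phi y else 0)"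
      using phi0 by (intro AE_I2 sum_nonneg) auto
  qed
  also have "\<dots> = (\<Sum>p\<in>P. (\<integral>y. (if y \<in> B p r then phi y else 0) \<partial>lebesgue))"
    using intU by (intro Bochner_Integration.integral_sum) auto
  also have "\<dots> = (\<Sum>p\<in>P. (\<integral>y. phi y \<partial>lebesgue_on (B p r)))"
    by (intro sum.cong refl Lebesgue_Measure.integral_restrict_UNIV[OF B_sets])
  also have "\<dots> \<le> (\<Sum>p\<in>P. C5 * K * r powr al * (Cu * r powr nn))"
  proof (intro sum_mono)
    fix p assume p: "p \<in> P"
    have "(\<integral>y. phi y \<partial>lebesgue_on (B p r)) \<le> C5 * K * r powr al * m p r"
      unfolding phi_def using p P(2) r D_pos by (intro int_ball) auto
    also have "\<dots> \<le> C5 * K * r powr al * (Cu * r powr nn)"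
      using C5_nonneg K m_upper[OF r(1), of p] by (intro mult_left_mono) auto
    finally show "(\<integral>y. phi y \<partial>lebesgue_on (B p r)) \<le> C5 * K * r powr al * (Cu * r powr nn)" .
  qed
  also have "\<dots> = real (card P) * (C5 * K * r powr al * (Cu * r powr nn))" by simp
  also have "\<dots> \<le> (measure lebesgue Om / (c0 * (r/2) powr nn)) * (C5 * K * r powr al * (Cu * r powr nn))"
  proof (intro mult_right_mono)
    have "0 < c0 * (r/2) powr nn" using c0_pos r by simp
    then show "real (card P) \<le> measure lebesgue Om / (c0 * (r/2) powr nn)"
      using cP by (simp add: field_simps)
    show "0 \<le> C5 * K * r powr al * (Cu * r powr nn)" using C5_nonneg K Cu_pos by simp
  qed
  also have "\<dots> = Etot * r powr al"
  proof -
    have "(r/2) powr nn = r powr nn / 2 powr nn" using r by (simp add: powr_divide)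
    then show ?thesis using r c0_pos unfolding Etot_def by (simp add: field_simps)
  qed
  finally show ?thesis unfolding phi_def .
qed

lemma hh_ae: "AE y in lebesgue_on Om. hh y = f y"
proof -
  define I where "I = (\<integral>y. \<bar>f y - hh y\<bar> \<partial>lebesgue_on Om)"
  have I0: "I \<ge> 0" unfolding I_def by simp
  have E0: "Etot \<ge> 0" using C5_nonneg K Cu_pos c0_pos by (simp add: Etot_def)
  have "I \<le> 0"
  proof (rule ccontr)
    assume "\<not> I \<le> 0"
    then have Ip: "I > 0" by simp
    define E' where "E' = Etot * D powr al + 1"
    have E': "E' > 0" using E0 by (simp add: E'_def add_nonneg_pos)
    obtain k where k: "qa ^ k < I / E'" using real_arch_pow_inv[of "I / E'" qa] Ip E' qa_bounds by auto
    define r where "r = D * (1/2::real)^k"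
    have r: "0 < r" "r \<le> D" using D_pos by (auto simp: r_def power_le_one mult_left_le)
    have "r powr al = D powr al * qa ^ k"
    proof -
      have "r powr al = D powr al * ((1/2::real)^k) powr al" by (simp add: r_def powr_mult)
      also have "((1/2::real)^k) powr al = qa ^ k"
        unfolding qa_def by (simp add: powr_realpow[symmetric] powr_powr mult.commute)
      finally show ?thesis .
    qed
    then have "I \<le> Etot * D powr al * qa ^ k" using total_int[OF r] by (simp add: I_def mult.assoc)
    also have "\<dots> \<le> E' * qa ^ k" using qa_bounds by (intro mult_right_mono) (auto simp: E'_def)
    also have "\<dots> < E' * (I / E')" using k E' by (intro mult_strict_left_mono) auto
    also have "\<dots> = I" using E' by simp
    finally show False by simp
  qed
  then have "I = 0" using I0 by simp
  then have "AE y in lebesgue_on Om. \<bar>f y - hh y\<bar> = 0"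
    unfolding I_def using integral_nonneg_eq_0_iff_AE[OF diff_int] by auto
  then show ?thesis by eventually_elim auto
qed

end

context H
begin

definition "Ccamp al = (2 * (Q * (1 / (1 - (1/2::real) powr al))) + Q) * 2 powr al"

lemma Ccamp_nonneg: "al > 0 \<Longrightarrow> Ccamp al \<ge> 0"
proof -
  assume al: "al > 0"
  have "(1/2::real) powr al < 1" using al by (simp add: powr01_less_one)
  then show ?thesis using Q_pos unfolding Ccamp_def by (simp add: field_simps)
qed

lemma campanato:
  fixes f :: "'m pt \<Rightarrow> real"
  assumes fint: "integrable (lebesgue_on Om) f" and K: "K \<ge> 0" and al: "al > 0"
    and camp: "\<And>x r. x \<in> Om \<Longrightarrow> 0 < r \<Longrightarrow> r \<le> 2 * D \<Longrightarrow>
       avg (B x r) (\<lambda>y. \<bar>f y - avg (B x r) f\<bar>) \<le> K * r powr al"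
  shows "\<exists>h. continuous_on Om h \<and> (AE y in lebesgue_on Om. h y = f y) \<and>
           (\<forall>x\<in>Om. \<forall>y\<in>Om. \<bar>h x - h y\<bar> \<le> Ccamp al * K * delta_g gam x y powr al)"
proof -
  interpret HC Om gam c0 f K al
    by unfold_locales (use fint K al camp in auto)
  have "C4 = Ccamp al" unfolding C4_def C3_def Sg_def qa_def Ccamp_def ..
  then show ?thesis using hh_cont hh_ae hh_holder by metis
qed

end

lemma abs_le_powr: "1 \<le> p \<Longrightarrow> \<bar>t::real\<bar> \<le> 1 + \<bar>t\<bar> powr p"
proof (cases "\<bar>t\<bar> \<le> 1")
  case True then show ?thesis by (smt (verit) powr_ge_zero)
next
  case False
  assume p: "1 \<le> p"
  have "\<bar>t\<bar> powr 1 \<le> \<bar>t\<bar> powr p" using False p by (intro powr_mono) auto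
  then show ?thesis using False by (smt (verit) powr_one_gt_zero_iff)
qed

lemma Lp_integrable:
  fixes f :: "'a::euclidean_space \<Rightarrow> real"
  assumes S: "S \<in> lmeasurable" and p: "1 \<le> p" and f: "Lp S p f"
  shows "integrable (lebesgue_on S) f"
proof -
  have fm: "finite_measure (lebesgue_on S)" using S by (rule finite_measure_lebesgue_on)
  have i: "integrable (lebesgue_on S) (\<lambda>x. 1 + \<bar>f x\<bar> powr p)"
    using f unfolding Lp_def
    by (intro Bochner_Integration.integrable_add finite_measure.integrable_const[OF fm]) auto
  show ?thesis
  proof (rule Bochner_Integration.integrable_bound[OF i])
    show "f \<in> borel_measurable (lebesgue_on S)" using f by (simp add: Lp_def)
    show "AE x in lebesgue_on S. norm (f x) \<le> norm (1 + \<bar>f x\<bar> powr p)"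
      using abs_le_powr[OF p] by (intro AE_I2) (smt (verit) powr_ge_zero real_norm_def)
  qed
qed

lemma grad_pw:
  fixes v :: "'i \<Rightarrow> real"
  assumes I: "finite I" and p: "1 \<le> p"
  shows "sqrt (\<Sum>i\<in>I. (v i)\<^sup>2) powr p \<le> real (card I) powr (p/2) * (\<Sum>i\<in>I. \<bar>v i\<bar> powr p)"
proof -
  define T where "T = (\<Sum>i\<in>I. \<bar>v i\<bar> powr p)"
  have T0: "T \<ge> 0" unfolding T_def by (simp add: sum_nonneg)
  have vi: "\<bar>v i\<bar> \<le> T powr (1/p)" if i: "i \<in> I" for i
  proof -
    have "\<bar>v i\<bar> powr p \<le> T" unfolding T_def by (rule member_le_sum[OF i]) (auto simp: I)
    then have "(\<bar>v i\<bar> powr p) powr (1/p) \<le> T powr (1/p)" using p by (intro powr_mono2) auto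
    then show ?thesis using p by (simp add: powr_powr)
  qed
  have sq: "(v i)\<^sup>2 \<le> (T powr (1/p))\<^sup>2" if "i \<in> I" for i
    using vi[OF that] by (metis abs_ge_zero power2_abs power_mono)
  have "(\<Sum>i\<in>I. (v i)\<^sup>2) \<le> (\<Sum>i\<in>I. (T powr (1/p))\<^sup>2)" by (intro sum_mono sq)
  also have "\<dots> = real (card I) * (T powr (1/p))\<^sup>2" by simp
  finally have "sqrt (\<Sum>i\<in>I. (v i)\<^sup>2) \<le> sqrt (real (card I) * (T powr (1/p))\<^sup>2)"
    by (rule real_sqrt_le_mono)
  also have "\<dots> = sqrt (real (card I)) * T powr (1/p)" by (simp add: real_sqrt_mult)
  finally have "sqrt (\<Sum>i\<in>I. (v i)\<^sup>2) powr p \<le> (sqrt (real (card I)) * T powr (1/p)) powr p"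
    using p by (intro powr_mono2) (auto intro: sum_nonneg)
  also have "\<dots> = sqrt (real (card I)) powr p * T"
    using p T0 by (simp add: powr_mult powr_powr)
  also have "sqrt (real (card I)) powr p = real (card I) powr (p/2)"
  proof -
    have "sqrt (real (card I)) = real (card I) powr (1/2)" by (simp add: powr_half_sqrt)
    then show ?thesis by (simp add: powr_powr)
  qed
  finally show ?thesis by (simp add: T_def)
qed

context H
begin

lemma morrey_mem:
  assumes x: "x \<in> Om" and s: "s > 0"
  shows "((1 / min (s powr lam) 1) * (\<integral>y. \<bar>g y\<bar> powr p \<partial>lebesgue_on (B x s))) powr (1/p)
         \<in> morrey_vals lam p gam Om g"
  unfolding morrey_vals_def B_def mem_Collect_eq using x s
  by (intro exI[of _ x] exI[of _ s]) (simp add: Int_commute)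

lemma morrey_nonneg:
  assumes "in_morrey lam p gam Om g"
  shows "0 \<le> morrey_norm lam p gam Om g"
proof -
  obtain x where x: "x \<in> Om" using Om_ne by auto
  have "0 \<le> ((1 / min (1 powr lam) 1) * (\<integral>y. \<bar>g y\<bar> powr p \<partial>lebesgue_on (B x 1))) powr (1/p)" by simp
  also have "\<dots> \<le> morrey_norm lam p gam Om g"
    unfolding morrey_norm_def using assms morrey_mem[OF x, of 1] by (intro cSup_upper) (auto simp: in_morrey_def)
  finally show ?thesis .
qed

lemma morrey_int:
  assumes g: "in_morrey lam p gam Om g" and p: "1 \<le> p" and x: "x \<in> Om" and s: "s > 0"
  shows "(\<integral>y. \<bar>g y\<bar> powr p \<partial>lebesgue_on (B x s)) \<le> min (s powr lam) 1 * morrey_norm lam p gam Om g powr p"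
proof -
  define I where "I = (\<integral>y. \<bar>g y\<bar> powr p \<partial>lebesgue_on (B x s))"
  define mn where "mn = min (s powr lam) 1"
  define N where "N = morrey_norm lam p gam Om g"
  have I0: "I \<ge> 0" unfolding I_def by simp
  have mn: "mn > 0" using s by (simp add: mn_def)
  have "((1 / mn) * I) powr (1/p) \<le> N"
    unfolding N_def morrey_norm_def I_def mn_def
    using g morrey_mem[OF x s, of lam g] by (intro cSup_upper) (auto simp: in_morrey_def)
  then have "(((1 / mn) * I) powr (1/p)) powr p \<le> N powr p"
    using p I0 mn by (intro powr_mono2) auto
  then have "(1 / mn) * I \<le> N powr p" using p I0 mn by (simp add: powr_powr)
  then have "I \<le> mn * N powr p" using mn by (simp add: field_simps)
  then show ?thesis by (simp add: I_def mn_def N_def)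
qed

end

context H
begin

lemma grad_avg:
  fixes g :: "'m pt \<Rightarrow> 'm pt \<Rightarrow> real" and lam p :: real
  assumes p: "1 \<le> p" and g: "\<forall>i\<in>Basis. in_morrey lam p gam Om (g i)"
    and x: "x \<in> Om" and s: "s > 0"
  shows "avg (B x s) (\<lambda>y. sqrt (\<Sum>i\<in>Basis. (g i y)\<^sup>2) powr p)
     \<le> real DIM('m pt) powr (p/2) * (real DIM('m pt) * (\<Sum>i\<in>Basis. morrey_norm lam p gam Om (g i)) powr p)
        * min (s powr lam) 1 / m x s"
proof -
  define d where "d = real DIM('m pt)"
  define G where "G = (\<Sum>i\<in>Basis. morrey_norm lam p gam Om (g i))"
  define mn where "mn = min (s powr lam) 1"
  have mxs: "m x s > 0" by (rule m_pos[OF x s])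
  have N0: "0 \<le> morrey_norm lam p gam Om (g i)" if "i \<in> Basis" for i
    using g that morrey_nonneg by blast
  have NG: "morrey_norm lam p gam Om (g i) \<le> G" if "i \<in> Basis" for i
    unfolding G_def by (rule member_le_sum[OF that]) (use N0 in auto)
  have ig: "integrable (lebesgue_on (B x s)) (\<lambda>y. \<bar>g i y\<bar> powr p)" if "i \<in> Basis" for i
  proof -
    have "integrable (lebesgue_on Om) (\<lambda>y. \<bar>g i y\<bar> powr p)"
      using g that by (auto simp: in_morrey_def Lp_def)
    then show ?thesis by (rule integrable_lebesgue_on_subset[OF _ B_sub B_sets Om_sets])
  qed
  have isum: "integrable (lebesgue_on (B x s)) (\<lambda>y. d powr (p/2) * (\<Sum>i\<in>Basis. \<bar>g i y\<bar> powr p))"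
    using ig by (intro integrable_mult_right Bochner_Integration.integrable_sum) auto
  have "(\<integral>y. sqrt (\<Sum>i\<in>Basis. (g i y)\<^sup>2) powr p \<partial>lebesgue_on (B x s))
      \<le> (\<integral>y. d powr (p/2) * (\<Sum>i\<in>Basis. \<bar>g i y\<bar> powr p) \<partial>lebesgue_on (B x s))"
  proof (rule integral_mono_AE'[OF isum])
    show "AE y in lebesgue_on (B x s). sqrt (\<Sum>i\<in>Basis. (g i y)\<^sup>2) powr p
        \<le> d powr (p/2) * (\<Sum>i\<in>Basis. \<bar>g i y\<bar> powr p)"
    proof (rule AE_I2)
      fix y
      show "sqrt (\<Sum>i\<in>Basis. (g i y)\<^sup>2) powr p \<le> d powr (p/2) * (\<Sum>i\<in>Basis. \<bar>g i y\<bar> powr p)"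
        unfolding d_def by (rule grad_pw[OF finite_Basis p, of "\<lambda>i. g i y"])
    qed
    show "AE y in lebesgue_on (B x s). 0 \<le> d powr (p/2) * (\<Sum>i\<in>Basis. \<bar>g i y\<bar> powr p)"
      by (intro AE_I2 mult_nonneg_nonneg sum_nonneg) auto
  qed
  also have "\<dots> = d powr (p/2) * (\<Sum>i\<in>Basis. (\<integral>y. \<bar>g i y\<bar> powr p \<partial>lebesgue_on (B x s)))"
    using ig by (simp add: Bochner_Integration.integral_sum)
  also have "\<dots> \<le> d powr (p/2) * (\<Sum>i\<in>(Basis::'m pt set). mn * G powr p)"
  proof -
    have "(\<integral>y. \<bar>g i y\<bar> powr p \<partial>lebesgue_on (B x s)) \<le> mn * G powr p" if i: "i \<in> Basis" for i
    proof -
      have "(\<integral>y. \<bar>g i y\<bar> powr p \<partial>lebesgue_on (B x s)) \<le> mn * morrey_norm lam p gam Om (g i) powr p"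
        unfolding mn_def using g i by (intro morrey_int[OF _ p x s]) auto
      also have "\<dots> \<le> mn * G powr p"
        using N0[OF i] NG[OF i] p s by (intro mult_left_mono powr_mono2) (auto simp: mn_def)
      finally show ?thesis .
    qed
    then have "(\<Sum>i\<in>Basis. (\<integral>y. \<bar>g i y\<bar> powr p \<partial>lebesgue_on (B x s))) \<le> (\<Sum>i\<in>(Basis::'m pt set). mn * G powr p)"
      by (rule sum_mono)
    then show ?thesis by (intro mult_left_mono) auto
  qed
  also have "\<dots> = d powr (p/2) * (d * G powr p) * mn" by (simp add: d_def)
  finally have "(\<integral>y. sqrt (\<Sum>i\<in>Basis. (g i y)\<^sup>2) powr p \<partial>lebesgue_on (B x s))
      \<le> d powr (p/2) * (d * G powr p) * mn" .
  then show ?thesis using mxs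
    unfolding avg_def m_def[symmetric] d_def[symmetric] G_def[symmetric] mn_def[symmetric]
    by (simp add: field_simps)
qed

lemma ratio_bound:
  fixes lam tau r :: real
  assumes x: "x \<in> Om" and r: "0 < r" "r \<le> 2 * D" and tau: "tau \<ge> 1"
  shows "min ((tau * r) powr lam) 1 / m x (tau * r)
         \<le> (tau powr (lam - nn) + tau powr lam * 2 powr nn) / c0 * r powr (lam - nn)"
proof -
  define s where "s = tau * r"
  have s: "s > 0" using r tau by (simp add: s_def)
  have low: "c0 * (min s D) powr nn \<le> m x s" by (rule m_lower[OF x s])
  have lowp: "0 < c0 * (min s D) powr nn" using c0_pos s D_pos by simp
  have "min (s powr lam) 1 / m x s \<le> s powr lam / m x s"
    using m_pos[OF x s] by (intro divide_right_mono) auto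
  also have "\<dots> \<le> s powr lam / (c0 * (min s D) powr nn)"
    using low lowp by (intro divide_left_mono) auto
  also have "\<dots> \<le> (tau powr (lam - nn) + tau powr lam * 2 powr nn) / c0 * r powr (lam - nn)"
  proof (cases "s \<le> D")
    case True
    have "s powr lam / (c0 * (min s D) powr nn) = s powr (lam - nn) / c0"
      using True s c0_pos by (simp add: powr_diff)
    also have "\<dots> = tau powr (lam - nn) / c0 * r powr (lam - nn)"
      by (simp add: s_def powr_mult)
    also have "\<dots> \<le> (tau powr (lam - nn) + tau powr lam * 2 powr nn) / c0 * r powr (lam - nn)"
      using c0_pos by (intro mult_right_mono divide_right_mono) auto
    finally show ?thesis .
  next
    case False
    have rD: "(r / 2) powr nn \<le> D powr nn" using r nn_pos by (intro powr_mono2) auto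
    have rp: "0 < (r/2) powr nn" using r by simp
    have "s powr lam / (c0 * (min s D) powr nn) = s powr lam / (c0 * D powr nn)"
      using False by simp
    also have "\<dots> \<le> s powr lam / (c0 * (r/2) powr nn)"
      using rD rp c0_pos D_pos by (intro divide_left_mono mult_left_mono) (auto intro!: mult_pos_pos)
    also have "\<dots> = tau powr lam * 2 powr nn / c0 * r powr (lam - nn)"
      using r c0_pos by (simp add: s_def powr_mult powr_divide powr_diff)
    also have "\<dots> \<le> (tau powr (lam - nn) + tau powr lam * 2 powr nn) / c0 * r powr (lam - nn)"
      using c0_pos by (intro mult_right_mono divide_right_mono) auto
    finally show ?thesis .
  qed
  finally show ?thesis by (simp add: s_def)
qed

end

theorem theorem2p7:
  fixes \<Omega> :: "'m::finite pt set"
    and gam p c0 tau eta cp lam :: real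
  assumes gam: "0 < gam" "gam \<le> 1"
    and p: "1 \<le> p"
    and dom: "open \<Omega>" "connected \<Omega>" "\<Omega> \<noteq> {}" "bounded \<Omega>"
    and c0: "c0 > 0"
    and ahlfors: "\<forall>x\<in>closure \<Omega>. \<forall>r. 0 < r \<and> r \<le> diam_g gam \<Omega> \<longrightarrow>
                   measure lebesgue (ball_g gam x r \<inter> \<Omega>) \<ge> c0 * r powr n_gam gam TYPE('m)"
    and tau: "tau \<ge> 1" and eta: "eta > 0" and cp: "cp > 0"
    and poincare: "\<forall>f g. Lp \<Omega> p f \<and> (\<forall>i\<in>Basis. weak_partial \<Omega> f i (g i) \<and> Lp \<Omega> p (g i)) \<longrightarrow>
        (\<forall>x\<in>\<Omega>. \<forall>r>0.
           avg (\<Omega> \<inter> ball_g gam x r) (\<lambda>y. \<bar>f y - avg (\<Omega> \<inter> ball_g gam x r) f\<bar>)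
           \<le> cp * r powr eta *
              (avg (\<Omega> \<inter> ball_g gam x (tau * r))
                 (\<lambda>y. (sqrt (\<Sum>i\<in>Basis. (g i y)\<^sup>2)) powr p)) powr (1 / p))"
    and lam: "lam > 0" "p * eta > n_gam gam TYPE('m) - lam"
  shows "\<exists>c>0. \<forall>f g. in_morrey lam p gam \<Omega> f \<and>
            (\<forall>i\<in>Basis. weak_partial \<Omega> f i (g i) \<and> in_morrey lam p gam \<Omega> (g i)) \<longrightarrow>
          (\<exists>h. continuous_on \<Omega> h \<and> (AE y in lebesgue_on \<Omega>. h y = f y) \<and>
            (\<forall>x\<in>\<Omega>. \<forall>y\<in>\<Omega>. \<bar>h x - h y\<bar> \<le>
               c * (morrey_norm lam p gam \<Omega> f + (\<Sum>i\<in>Basis. morrey_norm lam p gam \<Omega> (g i))) *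
               (norm (fst x - fst y) powr gam + \<bar>snd x - snd y\<bar>)
                 powr (eta + (lam - n_gam gam TYPE('m)) / p)))"
proof -
  interpret H \<Omega> gam c0
    using gam dom c0 ahlfors by unfold_locales auto
  have nnd: "n_gam gam TYPE('m) = nn" by (simp add: nn_def)
  define al where "al = eta + (lam - nn) / p"
  have p0: "p > 0" using p by simp
  have al: "al > 0"
  proof -
    have "(nn - lam) / p < eta" using lam(2) p0 nnd by (simp add: divide_less_eq mult.commute)
    then show ?thesis by (simp add: al_def diff_divide_distrib)
  qed
  define d where "d = real DIM('m pt)"
  define Kb where "Kb = (tau powr (lam - nn) + tau powr lam * 2 powr nn) / c0"
  define Kc where "Kc = cp * (d powr (p/2) * d * Kb) powr (1/p)"
  have Kc0: "Kc \<ge> 0" using cp by (simp add: Kc_def)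
  define c where "c = Ccamp al * Kc + 1"
  have cC: "Ccamp al \<ge> 0" using Ccamp_nonneg[OF al] .
  have c: "c > 0" using cC Kc0 by (simp add: c_def add_nonneg_pos)
  show ?thesis
  proof (intro exI[of _ c] conjI allI impI c)
    fix f :: "'m pt \<Rightarrow> real" and g :: "'m pt \<Rightarrow> 'm pt \<Rightarrow> real"
    assume fg: "in_morrey lam p gam \<Omega> f \<and>
            (\<forall>i\<in>Basis. weak_partial \<Omega> f i (g i) \<and> in_morrey lam p gam \<Omega> (g i))"
    define G where "G = (\<Sum>i\<in>Basis. morrey_norm lam p gam \<Omega> (g i))"
    have gm: "\<forall>i\<in>Basis. in_morrey lam p gam \<Omega> (g i)" using fg by blast
    have G0: "G \<ge> 0" unfolding G_def using gm morrey_nonneg by (intro sum_nonneg) blast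
    have Nf: "morrey_norm lam p gam \<Omega> f \<ge> 0" using fg morrey_nonneg by blast
    have fint: "integrable (lebesgue_on \<Omega>) f"
      using fg Lp_integrable[OF Om_lmeas p] by (auto simp: in_morrey_def)
    have hyp: "Lp \<Omega> p f \<and> (\<forall>i\<in>Basis. weak_partial \<Omega> f i (g i) \<and> Lp \<Omega> p (g i))"
      using fg by (auto simp: in_morrey_def)
    have camp: "avg (B x r) (\<lambda>y. \<bar>f y - avg (B x r) f\<bar>) \<le> (Kc * G) * r powr al"
      if x: "x \<in> \<Omega>" and r: "0 < r" "r \<le> 2 * D" for x r
    proof -
      define A where "A = avg (B x (tau * r)) (\<lambda>y. (sqrt (\<Sum>i\<in>Basis. (g i y)\<^sup>2)) powr p)"
      have s: "tau * r > 0" using tau r by simp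
      have P1: "avg (B x r) (\<lambda>y. \<bar>f y - avg (B x r) f\<bar>) \<le> cp * r powr eta * A powr (1/p)"
        using poincare hyp x r unfolding A_def B_def by blast
      have A0: "A \<ge> 0" unfolding A_def avg_def by simp
      have P2: "A \<le> d powr (p/2) * (d * G powr p) * min ((tau * r) powr lam) 1 / m x (tau * r)"
        unfolding A_def d_def G_def by (rule grad_avg[OF p gm x s])
      have P3: "min ((tau * r) powr lam) 1 / m x (tau * r) \<le> Kb * r powr (lam - nn)"
        unfolding Kb_def by (rule ratio_bound[OF x r tau])
      have dd: "0 \<le> d powr (p/2) * (d * G powr p)" by (simp add: d_def)
      have "A \<le> d powr (p/2) * (d * G powr p) * (min ((tau * r) powr lam) 1 / m x (tau * r))"
        using P2 by simp
      also have "\<dots> \<le> d powr (p/2) * (d * G powr p) * (Kb * r powr (lam - nn))"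
        using P3 dd by (intro mult_left_mono) auto
      also have "\<dots> = (d powr (p/2) * d * Kb) * G powr p * r powr (lam - nn)" by (simp add: algebra_simps)
      finally have AX: "A \<le> (d powr (p/2) * d * Kb) * G powr p * r powr (lam - nn)" .
      have "A powr (1/p) \<le> ((d powr (p/2) * d * Kb) * G powr p * r powr (lam - nn)) powr (1/p)"
        using AX A0 p0 by (intro powr_mono2) auto
      also have "\<dots> = (d powr (p/2) * d * Kb) powr (1/p) * G * r powr ((lam - nn) / p)"
        using G0 p0 by (simp add: powr_mult powr_powr)
      finally have "cp * r powr eta * A powr (1/p)
          \<le> cp * r powr eta * ((d powr (p/2) * d * Kb) powr (1/p) * G * r powr ((lam - nn) / p))"
        using cp by (intro mult_left_mono) auto
      also have "\<dots> = (Kc * G) * r powr al"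
        by (simp add: Kc_def al_def powr_add)
      finally show ?thesis using P1 by linarith
    qed
    have K0: "Kc * G \<ge> 0" using Kc0 G0 by simp
    obtain h where h: "continuous_on \<Omega> h" "AE y in lebesgue_on \<Omega>. h y = f y"
      and hol: "\<forall>x\<in>\<Omega>. \<forall>y\<in>\<Omega>. \<bar>h x - h y\<bar> \<le> Ccamp al * (Kc * G) * delta_g gam x y powr al"
      using campanato[OF fint K0 al camp] by blast
    show "\<exists>h. continuous_on \<Omega> h \<and> (AE y in lebesgue_on \<Omega>. h y = f y) \<and>
            (\<forall>x\<in>\<Omega>. \<forall>y\<in>\<Omega>. \<bar>h x - h y\<bar> \<le>
               c * (morrey_norm lam p gam \<Omega> f + (\<Sum>i\<in>Basis. morrey_norm lam p gam \<Omega> (g i))) *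
               (norm (fst x - fst y) powr gam + \<bar>snd x - snd y\<bar>)
                 powr (eta + (lam - n_gam gam TYPE('m)) / p))"
    proof (intro exI[of _ h] conjI h ballI)
      fix x y assume x: "x \<in> \<Omega>" and y: "y \<in> \<Omega>"
      define S where "S = norm (fst x - fst y) powr gam + \<bar>snd x - snd y\<bar>"
      have dS: "delta_g gam x y powr al \<le> S powr al"
        unfolding S_def using delta_g_le_sum[of gam x y] delta_g_nonneg[of gam x y] al by (intro powr_mono2) auto
      have S0: "S powr al \<ge> 0" by simp
      have "\<bar>h x - h y\<bar> \<le> Ccamp al * (Kc * G) * delta_g gam x y powr al" using hol x y by blast
      also have "\<dots> \<le> Ccamp al * (Kc * G) * S powr al"
        using dS cC K0 by (intro mult_left_mono) auto
      also have "\<dots> \<le> c * (morrey_norm lam p gam \<Omega> f + G) * S powr al"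
      proof (intro mult_right_mono S0)
        have "Ccamp al * (Kc * G) = (Ccamp al * Kc) * G" by simp
        also have "\<dots> \<le> (Ccamp al * Kc + 1) * G" using G0 by (intro mult_right_mono) auto
        also have "\<dots> \<le> (Ccamp al * Kc + 1) * (morrey_norm lam p gam \<Omega> f + G)"
          using Nf cC Kc0 by (intro mult_left_mono) auto
        finally show "Ccamp al * (Kc * G) \<le> c * (morrey_norm lam p gam \<Omega> f + G)" by (simp add: c_def)
      qed
      finally show "\<bar>h x - h y\<bar> \<le>
               c * (morrey_norm lam p gam \<Omega> f + (\<Sum>i\<in>Basis. morrey_norm lam p gam \<Omega> (g i))) *
               (norm (fst x - fst y) powr gam + \<bar>snd x - snd y\<bar>)
                 powr (eta + (lam - n_gam gam TYPE('m)) / p)"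
        by (simp add: S_def G_def al_def nnd)
    qed
  qed
qed


end
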